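(* For $n\ge2$ and all $P,Q\in\Gamma_n$, $D_{Th}(P\|Q)\le 3D_{Jh}(P\|Q)$.
   Context: $\Gamma_n=\{P=(p_1,\dots,p_n): p_i>0,\ \sum p_i=1\}$. $h(P\|Q)=\frac12\sum_{i=1}^n(\sqrt{p_i}-\sqrt{q_i})^2$; $J(P\|Q)=\sum_{i=1}^n(p_i-q_i)\ln\frac{p_i}{q_i}$; $T(P\|Q)=\sum_{i=1}^n\frac{p_i+q_i}{2}\ln\frac{p_i+q_i}{2\sqrt{p_iq_i}}$. $D_{Th}=T-h$, $D_{Jh}=\frac18J-h$. *)

theory Defs
  imports Complex_Main
begin

definition Gamma :: "nat \<Rightarrow> (nat \<Rightarrow> real) set" where
  "Gamma n = {p. (\<forall>i<n. p i > 0) \<and> (\<Sum>i<n. p i) = 1}"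

definition hell :: "nat \<Rightarrow> (nat \<Rightarrow> real) \<Rightarrow> (nat \<Rightarrow> real) \<Rightarrow> real" where
  "hell n p q = (1/2) * (\<Sum>i<n. (sqrt (p i) - sqrt (q i))^2)"

definition Jdiv :: "nat \<Rightarrow> (nat \<Rightarrow> real) \<Rightarrow> (nat \<Rightarrow> real) \<Rightarrow> real" where
  "Jdiv n p q = (\<Sum>i<n. (p i - q i) * ln (p i / q i))"

definition Tdiv :: "nat \<Rightarrow> (nat \<Rightarrow> real) \<Rightarrow> (nat \<Rightarrow> real) \<Rightarrow> real" where
  "Tdiv n p q = (\<Sum>i<n. ((p i + q i) / 2) * ln ((p i + q i) / (2 * sqrt (p i * q i))))"

definition D_Th :: "nat \<Rightarrow> (nat \<Rightarrow> real) \<Rightarrow> (nat \<Rightarrow> real) \<Rightarrow> real" where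
  "D_Th n p q = Tdiv n p q - hell n p q"

definition D_Jh :: "nat \<Rightarrow> (nat \<Rightarrow> real) \<Rightarrow> (nat \<Rightarrow> real) \<Rightarrow> real" where
  "D_Jh n p q = (1/8) * Jdiv n p q - hell n p q"

end

theory Submission imports Defs begin

lemma P_nonneg:
  fixes x :: real assumes "x \<ge> 0"
  shows "0 \<le> 3/2 * (x - sinh x / cosh x) - sinh x / cosh x * ln (cosh x)"
proof -
  let ?P = "\<lambda>x::real. 3/2 * (x - sinh x / cosh x) - sinh x / cosh x * ln (cosh x)"
  have "?P 0 \<le> ?P x"
  proof (rule DERIV_nonneg_imp_nondecreasing[OF assms])
    fix y :: real
    have c1: "cosh y \<ge> 1" by (rule cosh_real_ge_1)
    have sq: "cosh y ^ 2 = sinh y ^ 2 + 1" by (rule cosh_square_eq)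
    have D0: "DERIV ?P y :> 3/2*(1 - (cosh y * cosh y - sinh y * sinh y)/(cosh y * cosh y)) - ((cosh y * cosh y - sinh y * sinh y)/(cosh y * cosh y) * ln (cosh y) + sinh y / cosh y * (sinh y / cosh y))"
      by (auto intro!: derivative_eq_intros simp: field_simps)
    have e: "cosh y * cosh y - sinh y * sinh y = 1" using sq by (simp add: power2_eq_square)
    have D: "DERIV ?P y :> (sinh y ^ 2 / 2 - ln (cosh y)) / cosh y ^ 2"
    proof -
      have v: "3/2*(1 - (cosh y * cosh y - sinh y * sinh y)/(cosh y * cosh y)) - ((cosh y * cosh y - sinh y * sinh y)/(cosh y * cosh y) * ln (cosh y) + sinh y / cosh y * (sinh y / cosh y)) = (sinh y ^ 2 / 2 - ln (cosh y)) / cosh y ^ 2"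
        unfolding e using c1 apply (simp add: field_simps power2_eq_square)
        using e by algebra
      show ?thesis using D0 unfolding v .
    qed
    have "ln (cosh y) \<le> cosh y - 1" using c1 by (simp add: ln_le_minus_one)
    also have "\<dots> \<le> sinh y ^ 2 / 2"
    proof -
      have "sinh y^2/2 - (cosh y - 1) = (cosh y - 1)^2/2" using sq by (simp add: power2_eq_square algebra_simps)
      moreover have "(cosh y - 1)^2/2 \<ge> 0" by simp
      ultimately show ?thesis by linarith
    qed
    finally have "0 \<le> (sinh y ^ 2 / 2 - ln (cosh y)) / cosh y ^ 2" by simp
    then show "\<exists>d. DERIV ?P y :> d \<and> d \<ge> 0" using D by blast
  qed
  then show ?thesis by simp
qed

lemma F_nonneg:
  fixes x :: real assumes "x \<ge> 0"
  shows "cosh x * ln (cosh x) + 2 * (cosh x - 1) \<le> 3/2 * x * sinh x"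
proof -
  let ?F = "\<lambda>x::real. 3/2 * x * sinh x - 2 * cosh x + 2 - cosh x * ln (cosh x)"
  have "?F 0 \<le> ?F x"
  proof (rule DERIV_nonneg_imp_nondecreasing[OF assms])
    fix y :: real assume y: "0 \<le> y"
    have c1: "cosh y \<ge> 1" by (rule cosh_real_ge_1)
    have D: "DERIV ?F y :> cosh y * (3/2 * (y - sinh y / cosh y) - sinh y / cosh y * ln (cosh y))"
      apply (rule derivative_eq_intros refl | simp)+
      using c1 by (simp add: field_simps)
    have "0 \<le> cosh y * (3/2 * (y - sinh y / cosh y) - sinh y / cosh y * ln (cosh y))"
      using P_nonneg[OF y] c1 by simp
    then show "\<exists>d. DERIV ?F y :> d \<and> d \<ge> 0" using D by blast
  qed
  then show ?thesis by simp
qed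

lemma F_all:
  fixes x :: real
  shows "cosh x * ln (cosh x) + 2 * (cosh x - 1) \<le> 3/2 * x * sinh x"
proof (cases "x \<ge> 0")
  case True then show ?thesis by (rule F_nonneg)
next
  case False
  then have "cosh (-x) * ln (cosh (-x)) + 2 * (cosh (-x) - 1) \<le> 3/2 * (-x) * sinh (-x)"
    by (intro F_nonneg) simp
  then show ?thesis by simp
qed

lemma pointwise:
  fixes a b :: real assumes a: "a > 0" and b: "b > 0"
  shows "(a + b) / 2 * ln ((a + b) / (2 * sqrt (a * b))) - 1/2 * (sqrt a - sqrt b)^2
     \<le> 3 * (1/8 * ((a - b) * ln (a / b)) - 1/2 * (sqrt a - sqrt b)^2)"
proof -
  define u where "u = sqrt a"
  define v where "v = sqrt b"
  have u: "u > 0" and v: "v > 0" using a b by (auto simp: u_def v_def)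
  have au: "a = u^2" and bv: "b = v^2" using a b by (auto simp: u_def v_def)
  define x where "x = ln (u / v)"
  have uv: "sqrt (a * b) = u * v" by (simp add: u_def v_def real_sqrt_mult)
  have c: "cosh x = (a + b) / (2 * (u * v))"
    unfolding x_def using u v by (simp add: cosh_ln_real au bv field_simps power2_eq_square)
  have s: "sinh x = (a - b) / (2 * (u * v))"
    unfolding x_def using u v by (simp add: sinh_ln_real au bv field_simps power2_eq_square)
  have l: "ln (a / b) = 2 * x"
  proof -
    have "a / b = (u / v)^2" by (simp add: au bv power_divide)
    then show ?thesis unfolding x_def using u v by (simp add: ln_realpow)
  qed
  have h: "(sqrt a - sqrt b)^2 = 2 * (u * v) * (cosh x - 1)"
    unfolding c using u v by (simp add: u_def[symmetric] v_def[symmetric] au bv field_simps power2_eq_square)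
  have T: "(a + b) / 2 * ln ((a + b) / (2 * sqrt (a * b))) = (u * v) * (cosh x * ln (cosh x))"
    unfolding uv c using u v by (simp add: field_simps)
  have J: "(a - b) * ln (a / b) = 4 * (u * v) * (x * sinh x)"
    unfolding l s using u v by (simp add: field_simps)
  have F: "(u * v) * (cosh x * ln (cosh x) + 2 * (cosh x - 1)) \<le> (u * v) * (3/2 * x * sinh x)"
    using F_all[of x] u v by (intro mult_left_mono) auto
  show ?thesis unfolding T J h using F by (simp add: algebra_simps)
qed

theorem proposition5p8:
  fixes n :: nat and p q :: "nat \<Rightarrow> real"
  assumes "n \<ge> 2" and "p \<in> Gamma n" and "q \<in> Gamma n"
  shows "D_Th n p q \<le> 3 * D_Jh n p q"
proof -
  have pp: "\<And>i. i < n \<Longrightarrow> p i > 0" and qp: "\<And>i. i < n \<Longrightarrow> q i > 0"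
    using assms(2,3) by (auto simp: Gamma_def)
  have L: "D_Th n p q = (\<Sum>i<n. (p i + q i) / 2 * ln ((p i + q i) / (2 * sqrt (p i * q i))) - 1/2 * (sqrt (p i) - sqrt (q i))^2)"
    by (simp add: D_Th_def Tdiv_def hell_def sum_subtractf sum_distrib_left)
  have R: "3 * D_Jh n p q = (\<Sum>i<n. 3 * (1/8 * ((p i - q i) * ln (p i / q i)) - 1/2 * (sqrt (p i) - sqrt (q i))^2))"
    by (simp add: D_Jh_def Jdiv_def hell_def sum_subtractf sum_distrib_left)
  show ?thesis unfolding L R
    by (rule sum_mono) (metis pointwise pp qp lessThan_iff)
qed

end
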